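(* There exists a probability density $f$ supported on $[0,\infty)$ such that $f\in\mathcal{L}_0\setminus\mathcal{S}_0$ and $f$ is not almost decreasing.
   Context: For a probability density $f$ on $[0,\infty)$: $f\in\mathcal{L}_0$ (long-tailed density) if $f(x)>0$ for all sufficiently large $x$ and for every constant $t\in\mathbb{R}$, $f(x+t)\sim f(x)$ as $x\to\infty$ (where $a(x)\sim b(x)$ means $a(x)/b(x)\to1$). $f\in\mathcal{S}_0$ (subexponential density) if $f\in\mathcal{L}_0$ and $\int_0^x f(x-y)f(y)\,dy\sim 2f(x)$ as $x\to\infty$. The density $f$ is called almost decreasing if there exists a constant $x_0\ge 0$ such that $f(x)>0$ for all $x\ge x_0$ and $\sup_{x_0\le x\le y<\infty} f(y)/f(x)<\infty$. *)

theory Defs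
  imports "HOL-Analysis.Analysis"
begin

definition prob_density_nonneg :: "(real \<Rightarrow> real) \<Rightarrow> bool" where
  "prob_density_nonneg f \<longleftrightarrow>
     f \<in> borel_measurable lborel \<and> (\<forall>x. 0 \<le> f x) \<and> (\<forall>x<0. f x = 0) \<and>
     integrable lborel f \<and> integral\<^sup>L lborel f = 1"

definition long_tailed_density :: "(real \<Rightarrow> real) \<Rightarrow> bool" where
  "long_tailed_density f \<longleftrightarrow>
     (\<forall>\<^sub>F x in at_top. f x > 0) \<and>
     (\<forall>t::real. ((\<lambda>x. f (x + t) / f x) \<longlongrightarrow> 1) at_top)"

definition subexp_density :: "(real \<Rightarrow> real) \<Rightarrow> bool" where
  "subexp_density f \<longleftrightarrow>
     long_tailed_density f \<and>
     ((\<lambda>x. (LINT y:{0..x}|lborel. f (x - y) * f y) / (2 * f x)) \<longlongrightarrow> 1) at_top"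

definition almost_decreasing :: "(real \<Rightarrow> real) \<Rightarrow> bool" where
  "almost_decreasing f \<longleftrightarrow>
     (\<exists>x0\<ge>0. (\<forall>x\<ge>x0. f x > 0) \<and>
        (\<exists>C. \<forall>x y. x0 \<le> x \<longrightarrow> x \<le> y \<longrightarrow> f y / f x \<le> C))"

end

theory Submission
  imports Defs
begin

definition hh :: "real \<Rightarrow> real" where "hh x = sqrt x * (2 + sin (pi * log 2 x))"
definition gg :: "real \<Rightarrow> real" where "gg x = (if 1 \<le> x then exp (- hh x) else 0)"

lemma ln2_ge: "ln (2::real) \<ge> 1/2"
proof -
  have "ln (1/2::real) \<le> 1/2 - 1" by (rule ln_le_minus_one) auto
  then show ?thesis by (simp add: ln_div)
qed

lemma hh_lip:
  assumes "1 \<le> x" "x \<le> y"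
  shows "\<bar>hh y - hh x\<bar> \<le> 12 * (y - x) / sqrt x"
proof -
  define A where "A = pi * log 2 x"
  define B where "B = pi * log 2 y"
  have sx: "sqrt x \<ge> 1" using assms by simp
  have eq: "hh y - hh x = (sqrt y - sqrt x) * (2 + sin B) + sqrt x * (sin B - sin A)"
    unfolding hh_def A_def B_def by (simp add: algebra_simps)
  have d1: "0 \<le> sqrt y - sqrt x" using assms by simp
  have d2: "sqrt y - sqrt x \<le> (y - x) / (2 * sqrt x)"
  proof -
    have "(sqrt y - sqrt x) * (sqrt y + sqrt x) = y - x" using assms
      by (simp add: algebra_simps)
    moreover have "sqrt y + sqrt x \<ge> 2 * sqrt x" using assms by simp
    ultimately have "(sqrt y - sqrt x) * (2 * sqrt x) \<le> y - x"
      by (metis d1 mult_left_mono)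
    then show ?thesis using sx by (simp add: field_simps)
  qed
  have t1: "\<bar>(sqrt y - sqrt x) * (2 + sin B)\<bar> \<le> 3 * ((y - x) / (2 * sqrt x))"
  proof -
    have "\<bar>2 + sin B\<bar> \<le> 3" unfolding abs_le_iff using sin_le_one[of B] sin_ge_minus_one[of B] by linarith
    then have "\<bar>(sqrt y - sqrt x) * (2 + sin B)\<bar> \<le> (sqrt y - sqrt x) * 3"
      using d1 unfolding abs_mult by (metis abs_of_nonneg mult_left_mono)
    also have "\<dots> \<le> 3 * ((y - x) / (2 * sqrt x))" using mult_left_mono[OF d2, of 3] by (simp only: mult.commute)
    finally show ?thesis .
  qed
  have lg: "0 \<le> ln (y/x)" "ln (y / x) \<le> y / x - 1" using assms
    by (auto intro!: ln_le_minus_one)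
  have "B - A = pi * (ln (y/x) / ln 2)"
    unfolding A_def B_def log_def using assms by (simp add: ln_div field_simps)
  have BA: "\<bar>B - A\<bar> \<le> 8 * ((y - x) / x)"
  proof -
    have "\<bar>B - A\<bar> = pi * (ln (y/x) / ln 2)" using \<open>B - A = _\<close> lg by simp
    also have "\<dots> \<le> 4 * (ln (y/x) / (1/2))"
      using lg ln2_ge pi_less_4
      by (intro mult_mono frac_le) auto
    also have "\<dots> \<le> 8 * ((y - x) / x)" using lg assms by (simp add: field_simps)
    finally show ?thesis .
  qed
  have t2: "\<bar>sqrt x * (sin B - sin A)\<bar> \<le> 8 * (y - x) / sqrt x"
  proof -
    have "\<bar>sin B - sin A\<bar> \<le> \<bar>B - A\<bar>"
    proof -
      have "\<bar>sin B - sin A\<bar> = \<bar>2 * sin ((B - A) / 2) * cos ((B + A) / 2)\<bar>"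
        by (simp add: sin_diff_sin)
      also have "\<dots> \<le> 2 * \<bar>(B - A) / 2\<bar> * 1"
        unfolding abs_mult
        using abs_sin_x_le_abs_x[of "(B - A) / 2"]
        by (intro mult_mono) auto
      finally show ?thesis by simp
    qed
    then have "\<bar>sqrt x * (sin B - sin A)\<bar> \<le> sqrt x * (8 * ((y - x) / x))"
    proof -
      have "\<bar>sin B - sin A\<bar> \<le> 8 * ((y - x) / x)" using BA \<open>\<bar>sin B - sin A\<bar> \<le> \<bar>B - A\<bar>\<close> by linarith
      then have "sqrt x * \<bar>sin B - sin A\<bar> \<le> sqrt x * (8 * ((y - x) / x))"
        by (rule mult_left_mono) (use assms in simp)
      moreover have "\<bar>sqrt x * (sin B - sin A)\<bar> = sqrt x * \<bar>sin B - sin A\<bar>"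
        using assms by (simp add: abs_mult)
      ultimately show ?thesis by simp
    qed
    also have "\<dots> = 8 * (y - x) / sqrt x"
    proof -
      have "sqrt x * (8 * ((y - x) / x)) = 8 * (y - x) * (sqrt x / x)" by simp
      also have "\<dots> = 8 * (y - x) / sqrt x" using assms sqrt_divide_self_eq[of x] by (simp only: divide_inverse)
      finally show ?thesis .
    qed
    finally show ?thesis .
  qed
  have "\<bar>hh y - hh x\<bar> \<le> 3 * ((y - x) / (2 * sqrt x)) + 8 * (y - x) / sqrt x"
    unfolding eq using t1 t2 abs_triangle_ineq by (smt (verit))
  also have "\<dots> = (19/2) * ((y - x) / sqrt x)" using sx by (simp add: field_simps)
  also have "\<dots> \<le> 12 * ((y - x) / sqrt x)" using assms by (intro mult_right_mono) auto
  finally show ?thesis by simp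
qed

lemma hh_ge: "1 \<le> x \<Longrightarrow> sqrt x \<le> hh x"
proof -
  assume "1 \<le> x"
  have "sqrt x * 1 \<le> sqrt x * (2 + sin (pi * log 2 x))"
  proof (rule mult_left_mono)
    show "1 \<le> 2 + sin (pi * log 2 x)" using sin_ge_minus_one[of "pi * log 2 x"] by linarith
  qed (use \<open>1 \<le> x\<close> in auto)
  then show ?thesis unfolding hh_def by simp
qed

lemma hh_le: "1 \<le> x \<Longrightarrow> hh x \<le> 3 * sqrt x"
  unfolding hh_def using sin_le_one[of "pi * log 2 x"]
  by (subst mult.commute, intro mult_right_mono) auto

lemma hh_nonneg: "1 \<le> x \<Longrightarrow> 0 \<le> hh x"
  using hh_ge[of x] by (meson order_trans real_sqrt_ge_zero zero_le_one)

lemma gg_nonneg: "0 \<le> gg x" unfolding gg_def by auto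
lemma gg_le1: "gg x \<le> 1" unfolding gg_def using hh_nonneg[of x] by auto

lemma exp_sqrt_bound:
  assumes "1 \<le> x" shows "exp (- sqrt x) \<le> 256 * x powr (-2)"
proof -
  define s where "s = sqrt x"
  have s0: "s \<ge> 1" using assms s_def by simp
  have e4: "exp s = exp (s/4) ^ 4" by (simp flip: exp_of_nat_mult)
  have "s/4 \<le> exp (s/4)" using exp_ge_add_one_self[of "s/4"] by linarith
  then have "(s/4)^4 \<le> exp (s/4) ^ 4" by (rule power_mono) (use s0 in simp)
  then have le: "(s/4)^4 \<le> exp s" unfolding e4 .
  have "s^4 = (s^2)^2" by (simp flip: power_mult)
  then have s4: "s^4 = x^2" using assms s_def by simp
  have "(s/4)^4 = x^2 / 256" by (simp add: power_divide s4)
  with le have le2: "x^2 / 256 \<le> exp s" by simp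
  have xp: "x powr (-2) = 1 / x^2" using assms by (simp add: powr_minus powr_numeral divide_inverse)
  have "exp (- s) = 1 / exp s" by (simp add: exp_minus divide_inverse)
  also have "\<dots> \<le> 1 / (x^2 / 256)" using le2 assms by (intro divide_left_mono) auto
  also have "\<dots> = 256 * (1 / x^2)" by simp
  finally show ?thesis unfolding xp s_def .
qed

lemma gg_meas: "gg \<in> borel_measurable lborel"
  unfolding gg_def hh_def by measurable

lemma powr_int: "integrable lborel (\<lambda>x::real. indicator {1..} x * x powr (-2))"
proof -
  have "(\<lambda>x::real. x powr (-2)) integrable_on {1..}"
    using has_integral_powr_to_inf[of "-2" 1] unfolding integrable_on_def by auto
  then have "(\<lambda>x::real. x powr (-2)) absolutely_integrable_on {1..}"
    by (rule nonnegative_absolutely_integrable_1) auto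
  then have "integrable lebesgue (\<lambda>x::real. indicator {1..} x * x powr (-2))"
    unfolding set_integrable_def by simp
  then show ?thesis
    by (subst (asm) integrable_completion) measurable
qed

lemma gg_int: "integrable lborel gg"
proof (rule Bochner_Integration.integrable_bound[OF integrable_mult_right[OF powr_int, of 256] gg_meas])
  show "AE x in lborel. norm (gg x) \<le> norm (256 * (indicator {1..} x * x powr (-2)))"
  proof (rule AE_I2)
    fix x :: real
    show "norm (gg x) \<le> norm (256 * (indicator {1..} x * x powr (-2)))"
    proof (cases "1 \<le> x")
      case True
      then have "gg x \<le> exp (- sqrt x)" unfolding gg_def using hh_ge[OF True] by simp
      also have "\<dots> \<le> 256 * x powr (-2)" by (rule exp_sqrt_bound[OF True])
      finally show ?thesis using True gg_nonneg[of x] by simp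
    qed (simp add: gg_def)
  qed
qed

lemma gg_pos_int: "integral\<^sup>L lborel gg > 0"
proof -
  have "exp (-6::real) = integral\<^sup>L lborel (\<lambda>x. indicator {1..2::real} x * exp (-6::real))"
    by simp
  also have "\<dots> \<le> integral\<^sup>L lborel gg"
  proof (rule integral_mono[OF _ gg_int])
    show "integrable lborel (\<lambda>x. indicator {1..2::real} x * exp (-6::real))"
      by (intro integrable_mult_left) simp
    fix x :: real
    show "indicator {1..2} x * exp (-6::real) \<le> gg x"
    proof (cases "x \<in> {1..2}")
      case True
      then have "hh x \<le> 6"
        using hh_le[of x] real_sqrt_le_mono[of x 4] by auto
      then show ?thesis using True unfolding gg_def by auto
    qed (simp add: gg_nonneg)
  qed
  finally show ?thesis by (smt (verit) exp_gt_zero)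
qed

lemma sin_nat_period: "sin (x + real k * (2 * pi)) = sin x"
proof (induction k)
  case (Suc k)
  have eq: "x + real (Suc k) * (2 * pi) = (x + real k * (2 * pi)) + 2 * pi" by (simp add: algebra_simps)
  show ?case by (simp only: eq sin_periodic Suc.IH)
qed simp

definition pk :: "nat \<Rightarrow> real" where "pk k = 2 powr (2 * real k + 1/2)"

lemma pk_pos: "pk k > 0" unfolding pk_def by simp

lemma hh_pk: "hh (pk k) = 3 * sqrt (pk k)"
proof -
  have "pi * log 2 (pk k) = pi/2 + real k * (2 * pi)" unfolding pk_def by (simp add: algebra_simps)
  then show ?thesis unfolding hh_def by (simp add: sin_nat_period)
qed

lemma hh_pk_half: "hh (pk k / 2) = sqrt (pk k / 2)"
proof -
  have e: "pk k / 2 = 2 powr ((2 * real k + 1/2) - 1)" unfolding pk_def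
    by (subst powr_diff) simp
  have a: "pi * log 2 (pk k / 2) = - (pi/2) + real k * (2 * pi)" unfolding e by (simp add: algebra_simps)
  show ?thesis unfolding hh_def a sin_nat_period by simp
qed

lemma hh_pk_double: "hh (2 * pk k) = sqrt (2 * pk k)"
proof -
  have e: "2 * pk k = 2 powr ((2 * real k + 1/2) + 1)" unfolding pk_def
    by (subst powr_add) simp
  have a: "pi * log 2 (2 * pk k) = 3/2*pi + real k * (2 * pi)" unfolding e by (simp add: algebra_simps)
  show ?thesis unfolding hh_def a sin_nat_period sin_3over2_pi by simp
qed

lemma pk_large: "\<exists>k\<ge>1. pk k \<ge> X"
proof -
  define k where "k = nat \<lceil>X\<rceil> + 1"
  have "X \<le> real k" unfolding k_def by linarith
  also have "real k \<le> 2 ^ k" using less_exp[of k] by (metis of_nat_less_numeral_power_cancel_iff less_imp_le)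
  also have "(2::real) ^ k = 2 powr (real k)" by (simp add: powr_realpow)
  also have "\<dots> \<le> pk k" unfolding pk_def by (intro powr_mono) auto
  finally show ?thesis unfolding k_def by auto
qed

lemma hh_shift: "((\<lambda>x. hh (x + t) - hh x) \<longlongrightarrow> 0) at_top"
proof (cases "t \<ge> 0")
  case True
  have "\<forall>\<^sub>F x in at_top. norm (hh (x+t) - hh x) \<le> 12 * t / sqrt x"
    using eventually_ge_at_top[of 1]
  proof eventually_elim
    case (elim x) then show ?case using hh_lip[of x "x+t"] True by simp
  qed
  moreover have "((\<lambda>x. 12 * t / sqrt x) \<longlongrightarrow> 0) at_top" by real_asymp
  ultimately show ?thesis by (rule Lim_null_comparison)
next
  case False
  have "\<forall>\<^sub>F x in at_top. norm (hh (x+t) - hh x) \<le> 12 * (-t) / sqrt (x + t)"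
    using eventually_ge_at_top[of "1 - t"]
  proof eventually_elim
    case (elim x) then show ?case using hh_lip[of "x+t" x] False by (simp add: abs_minus_commute)
  qed
  moreover have "((\<lambda>x. 12 * (-t) / sqrt (x + t)) \<longlongrightarrow> 0) at_top" by real_asymp
  ultimately show ?thesis by (rule Lim_null_comparison)
qed

lemma gg_ratio: "((\<lambda>x. (gg (x + t) / Z) / (gg x / Z)) \<longlongrightarrow> 1) at_top" if "Z > 0"
proof -
  have "((\<lambda>x. exp (- (hh (x + t) - hh x))) \<longlongrightarrow> exp (- 0)) at_top"
    by (intro tendsto_intros hh_shift)
  moreover have "\<forall>\<^sub>F x in at_top. exp (- (hh (x + t) - hh x)) = (gg (x + t) / Z) / (gg x / Z)"
    using eventually_ge_at_top[of "1 + \<bar>t\<bar>"]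
    by eventually_elim (use that in \<open>auto simp: gg_def exp_diff exp_minus field_simps\<close>)
  ultimately show ?thesis by (simp add: tendsto_cong)
qed

declare gg_meas[measurable]

lemma pk_ge4: "k \<ge> 1 \<Longrightarrow> pk k \<ge> 4"
proof -
  assume "k \<ge> 1"
  have "(4::real) = 2 powr 2" by simp
  also have "\<dots> \<le> pk k" unfolding pk_def using \<open>k \<ge> 1\<close> by (intro powr_mono) auto
  finally show ?thesis .
qed

lemma conv_lower:
  assumes Z: "Z > 0" and k: "k \<ge> 1"
  shows "(LINT y:{0..pk k}|lborel. (gg (pk k - y) / Z) * (gg y / Z)) \<ge> exp (- 2 * sqrt (pk k / 2) - 24) / Z^2"
proof -
  define p where "p = pk k"
  define c where "c = exp (- 2 * sqrt (p / 2) - 24) / Z^2"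
  have p4: "p \<ge> 4" unfolding p_def using pk_ge4[OF k] .
  have sub: "{p/2-1..p/2} \<subseteq> {0..p}" using p4 by auto
  have low: "c \<le> (gg (p - y) / Z) * (gg y / Z)" if y: "y \<in> {p/2-1..p/2}" for y
  proof -
    have y1: "1 \<le> y" "y \<le> p/2" "p/2 - 1 \<le> y" using y p4 by auto
    have "\<bar>hh (p/2) - hh y\<bar> \<le> 12 * (p/2 - y) / sqrt y" using hh_lip[of y "p/2"] y1 by simp
    also have "\<dots> \<le> 12 * 1 / 1"
      using y1 by (intro frac_le mult_left_mono) auto
    finally have b1: "hh y \<le> sqrt (p/2) + 12" using hh_pk_half[of k] unfolding p_def by linarith
    have "\<bar>hh (p - y) - hh (p/2)\<bar> \<le> 12 * (p - y - p/2) / sqrt (p/2)" using hh_lip[of "p/2" "p - y"] y1 p4 by simp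
    also have "\<dots> \<le> 12 * 1 / 1"
      using y1 p4 by (intro frac_le mult_left_mono) auto
    finally have b2: "hh (p - y) \<le> sqrt (p/2) + 12" using hh_pk_half[of k] unfolding p_def by linarith
    have "gg (p - y) * gg y = exp (- (hh (p - y) + hh y))"
      using y1 unfolding gg_def by (simp add: mult_exp_exp)
    then have "(gg (p - y) / Z) * (gg y / Z) = exp (- (hh (p - y) + hh y)) / Z^2"
      by (simp add: power2_eq_square)
    moreover have "exp (- 2 * sqrt (p / 2) - 24) \<le> exp (- (hh (p - y) + hh y))"
      using b1 b2 by simp
    ultimately show ?thesis unfolding c_def using Z by (simp add: divide_right_mono)
  qed
  have "c = integral\<^sup>L lborel (\<lambda>y. indicator {p/2-1..p/2} y * c)"
    by simp
  also have "\<dots> \<le> integral\<^sup>L lborel (\<lambda>y. indicator {0..p} y *\<^sub>R ((gg (p - y) / Z) * (gg y / Z)))"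
  proof (rule integral_mono)
    show "integrable lborel (\<lambda>y. indicator {p/2-1..p/2} y * c)"
      by (intro integrable_mult_left) simp
    show "integrable lborel (\<lambda>y. indicator {0..p} y *\<^sub>R ((gg (p - y) / Z) * (gg y / Z)))"
    proof (rule Bochner_Integration.integrable_bound)
      show "integrable lborel (\<lambda>y. indicator {0..p} y * (1 / Z^2))"
        by (intro integrable_mult_left integrable_real_indicator) (auto simp: emeasure_lborel_Icc_eq)
      show "(\<lambda>y. indicator {0..p} y *\<^sub>R ((gg (p - y) / Z) * (gg y / Z))) \<in> borel_measurable lborel"
        by measurable
      show "AE y in lborel. norm (indicator {0..p} y *\<^sub>R ((gg (p - y) / Z) * (gg y / Z))) \<le> norm (indicator {0..p} y * (1 / Z^2))"
      proof (rule AE_I2)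
        fix y
        have "gg (p - y) * gg y \<le> 1 * 1"
          using gg_le1 gg_nonneg by (intro mult_mono) auto
        then show "norm (indicator {0..p} y *\<^sub>R ((gg (p - y) / Z) * (gg y / Z))) \<le> norm (indicator {0..p} y * (1 / Z^2))"
          using Z gg_nonneg[of y] gg_nonneg[of "p - y"]
          by (auto simp: indicator_def abs_mult power2_eq_square divide_right_mono)
      qed
    qed
    fix y
    show "indicator {p/2-1..p/2} y * c \<le> indicator {0..p} y *\<^sub>R ((gg (p - y) / Z) * (gg y / Z))"
      using low[of y] sub Z gg_nonneg[of y] gg_nonneg[of "p - y"] unfolding c_def
      by (auto simp: indicator_def)
  qed
  finally show ?thesis unfolding set_lebesgue_integral_def c_def p_def .
qed

lemma sqrt_big: "(a::real) \<ge> 0 \<Longrightarrow> p \<ge> a^2 \<Longrightarrow> sqrt p \<ge> a"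
  by (metis real_sqrt_abs real_sqrt_le_mono abs_of_nonneg)

theorem proposition1p2:
  shows "\<exists>f :: real \<Rightarrow> real. prob_density_nonneg f \<and> long_tailed_density f \<and>
           \<not> subexp_density f \<and> \<not> almost_decreasing f"
proof -
  define Z where "Z = integral\<^sup>L lborel gg"
  have Z: "Z > 0" unfolding Z_def by (rule gg_pos_int)
  define f where "f = (\<lambda>x. gg x / Z)"
  have fp: "f x = exp (- hh x) / Z" if "1 \<le> x" for x using that unfolding f_def gg_def by simp
  have "prob_density_nonneg f"
    unfolding prob_density_nonneg_def
  proof (intro conjI allI impI)
    show "f \<in> borel_measurable lborel" unfolding f_def by measurable
    show "0 \<le> f x" for x unfolding f_def using Z gg_nonneg[of x] by simp
    show "f x = 0" if "x < 0" for x unfolding f_def gg_def using that by simp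
    show "integrable lborel f" unfolding f_def by (intro integrable_divide gg_int)
    show "integral\<^sup>L lborel f = 1" unfolding f_def using Z by (simp add: Z_def)
  qed
  moreover have "long_tailed_density f"
    unfolding long_tailed_density_def
  proof (intro conjI allI)
    show "\<forall>\<^sub>F x in at_top. 0 < f x"
      using eventually_ge_at_top[of 1] by eventually_elim (use Z fp in simp)
    show "((\<lambda>x. f (x + t) / f x) \<longlongrightarrow> 1) at_top" for t
      unfolding f_def by (rule gg_ratio[OF Z])
  qed
  moreover have "\<not> subexp_density f"
  proof
    assume "subexp_density f"
    then have lim: "((\<lambda>x. (LINT y:{0..x}|lborel. f (x - y) * f y) / (2 * f x)) \<longlongrightarrow> 1) at_top"
      unfolding subexp_density_def by simp
    have "\<forall>\<^sub>F x in at_top. (LINT y:{0..x}|lborel. f (x - y) * f y) / (2 * f x) < 2"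
      by (rule order_tendstoD(2)[OF lim]) simp
    then obtain X where X: "\<And>x. x \<ge> X \<Longrightarrow> (LINT y:{0..x}|lborel. f (x - y) * f y) / (2 * f x) < 2"
      by (auto simp: eventually_at_top_linorder)
    obtain k where k: "k \<ge> 1" "pk k \<ge> max X ((4 * Z + 24)^2)" using pk_large by blast
    define p where "p = pk k"
    have p4: "p \<ge> 4" unfolding p_def using pk_ge4[OF k(1)] .
    have sp: "sqrt p \<ge> 4 * Z + 24" using k(2) Z unfolding p_def by (intro sqrt_big) auto
    have fpk: "f p = exp (- 3 * sqrt p) / Z" using fp[of p] p4 hh_pk[of k] unfolding p_def by simp
    have I: "(LINT y:{0..p}|lborel. f (p - y) * f y) \<ge> exp (- 2 * sqrt (p / 2) - 24) / Z^2"
      using conv_lower[OF Z k(1)] unfolding f_def p_def .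
    have "sqrt (p/2) \<le> sqrt p" using p4 by simp
    then have e1: "exp (sqrt p - 24) \<le> exp (3 * sqrt p - 2 * sqrt (p / 2) - 24)" by simp
    have "4 * Z \<le> sqrt p - 24" using sp by simp
    also have "\<dots> \<le> exp (sqrt p - 24)" using exp_ge_add_one_self[of "sqrt p - 24"] by linarith
    finally have e2: "4 * Z \<le> exp (3 * sqrt p - 2 * sqrt (p / 2) - 24)" using e1 by linarith
    have "(exp (- 2 * sqrt (p / 2) - 24) / Z^2) / (2 * f p) = exp (3 * sqrt p - 2 * sqrt (p / 2) - 24) / (2 * Z)"
      unfolding fpk using Z by (simp add: exp_diff exp_minus exp_add power2_eq_square field_simps)
    also have "\<dots> \<ge> 2" using e2 Z by (simp add: field_simps)
    finally have "2 \<le> (exp (- 2 * sqrt (p / 2) - 24) / Z^2) / (2 * f p)" .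
    also have "\<dots> \<le> (LINT y:{0..p}|lborel. f (p - y) * f y) / (2 * f p)"
      using I fpk Z by (intro divide_right_mono) auto
    also have "\<dots> < 2" using X[of p] k(2) unfolding p_def by simp
    finally show False by simp
  qed
  moreover have "\<not> almost_decreasing f"
  proof
    assume "almost_decreasing f"
    then obtain x0 C where x0: "x0 \<ge> 0" and C: "\<And>x y. x0 \<le> x \<Longrightarrow> x \<le> y \<Longrightarrow> f y / f x \<le> C"
      unfolding almost_decreasing_def by blast
    obtain k where k: "k \<ge> 1" "pk k \<ge> max x0 ((\<bar>C\<bar> + 1)^2)" using pk_large by blast
    define p where "p = pk k"
    have p4: "p \<ge> 4" unfolding p_def using pk_ge4[OF k(1)] .
    have sp: "sqrt p \<ge> \<bar>C\<bar> + 1" using k(2) unfolding p_def by (intro sqrt_big) auto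
    have fpk: "f p = exp (- 3 * sqrt p) / Z" using fp[of p] p4 hh_pk[of k] unfolding p_def by simp
    have fpk2: "f (2 * p) = exp (- sqrt (2 * p)) / Z" using fp[of "2 * p"] p4 hh_pk_double[of k] unfolding p_def by simp
    have "sqrt (2 * p) \<le> sqrt (4 * p)" using p4 by simp
    also have "sqrt (4 * p) = 2 * sqrt p" by (simp add: real_sqrt_mult)
    finally have s2: "sqrt (2 * p) \<le> 2 * sqrt p" .
    have "C < sqrt p" using sp by linarith
    also have "\<dots> \<le> exp (sqrt p)" using exp_ge_add_one_self[of "sqrt p"] by linarith
    also have "\<dots> \<le> exp (3 * sqrt p - sqrt (2 * p))" using s2 by simp
    also have "\<dots> = f (2 * p) / f p" unfolding fpk fpk2 using Z by (simp add: exp_diff exp_minus field_simps)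
    also have "\<dots> \<le> C" using C[of p "2 * p"] k(2) p4 unfolding p_def by simp
    finally show False by simp
  qed
  ultimately show ?thesis by blast
qed

end
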